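(* Let $E$ be a finite set with $\sigma$-algebra $\mathcal{E}=2^E$, and let $\mathcal{P}(E)$ denote the set of probability measures on $E$. Suppose that for every $\mu\in\mathcal{P}(E)$ a transition kernel $P_\mu(x,B)$ is given, and for $\mu\in\mathcal{P}(E)$ let $(X^\mu_n)_{n\in\mathbb{Z}_+}$ be the nonlinear Markov chain with $\mathrm{Law}(X_0^\mu)=\mu$ and $\mathbb{P}(X^\mu_{n+1}\in B\mid X^\mu_n=x)=P_{\mu_n}(x,B)$, where $\mu_n:=\mathrm{Law}(X_n^\mu)$ (so $\mu_{n+1}=\int_E P_{\mu_n}(x,\cdot)\mu_n(dx)$). Fix an integer $k\ge1$ and let $Q_\mu(x,dy)=\int P_\mu(x,dx_1)P_{\mu_1}(x_1,dx_2)\cdots P_{\mu_{k-1}}(x_{k-1},dy)$ be the $k$-step kernel. Assume: (i) there is $\alpha_k\in(0,1)$ with $\sup_{\mu,\nu\in\mathcal{P}(E)}\|Q_\mu(x,\cdot)-Q_\nu(y,\cdot)\|_{TV}\le 2(1-\alpha_k)$ for all $x,y\in E$; (ii) there is $\lambda_k\in[0,\alpha_k]$ with $\|Q_\mu(x,\cdot)-Q_\nu(x,\cdot)\|_{TV}\le\lambda_k\|\mu-\nu\|_{TV}$ for all $x\in E$, $\mu,\nu\in\mathcal{P}(E)$; (iii) there is $\lambda_1<\infty$ with $\|P_\mu(x,\cdot)-P_\nu(x,\cdot)\|_{TV}\le\lambda_1\|\mu-\nu\|_{TV}$ for all $x\in E$, $\mu,\nu\in\mathcal{P}(E)$. (Under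 these conditions there is a unique invariant measure $\pi$, i.e. $\pi P_\pi=\pi$.) Let $g:E\to\mathbb{R}$ be bounded, and for a fixed initial measure $\mu$ put $S_n=\sum_{j=0}^{n-1}g(X_j^\mu)$. Then, as $n\to\infty$, $$\frac{S_n}{n}\xrightarrow{\ \mathbb{P}\ }\mathbb{E}[g(X_0^\pi)]=\int_E g(x)\,\pi(dx),$$ where $X^\pi$ denotes the chain started from the invariant measure $\pi$.
   Context: The total variation distance is $\|\mu-\nu\|_{TV}=2\sup_{A\in\mathcal{E}}|\mu(A)-\nu(A)|$. Convergence $\xrightarrow{\mathbb{P}}$ is convergence in probability. *)

theory Defs
  imports "HOL-Probability.Probability"
begin

text \<open>Probability measures on a finite set E are represented by the type 'a pmf with 'a::finite
  (sigma-algebra = all subsets). A family of kernels P_mu(x,.) is P :: 'a pmf => 'a => 'a pmf.\<close>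

definition tv_norm :: "'a pmf \<Rightarrow> 'a pmf \<Rightarrow> real" where
  "tv_norm p q = 2 * (SUP A. \<bar>measure_pmf.prob p A - measure_pmf.prob q A\<bar>)"

definition law_step :: "('a pmf \<Rightarrow> 'a \<Rightarrow> 'a pmf) \<Rightarrow> 'a pmf \<Rightarrow> 'a pmf" where
  "law_step P \<mu> = bind_pmf \<mu> (P \<mu>)"

definition law_at :: "('a pmf \<Rightarrow> 'a \<Rightarrow> 'a pmf) \<Rightarrow> 'a pmf \<Rightarrow> nat \<Rightarrow> 'a pmf" where
  "law_at P \<mu> n = (law_step P ^^ n) \<mu>"

text \<open>kern_iter P n mu nu = nu P_mu P_{mu_1} ... P_{mu_{n-1}}.\<close>
fun kern_iter :: "('a pmf \<Rightarrow> 'a \<Rightarrow> 'a pmf) \<Rightarrow> nat \<Rightarrow> 'a pmf \<Rightarrow> 'a pmf \<Rightarrow> 'a pmf" where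
  "kern_iter P 0 \<mu> \<nu> = \<nu>"
| "kern_iter P (Suc n) \<mu> \<nu> = kern_iter P n (law_step P \<mu>) (bind_pmf \<nu> (P \<mu>))"

definition kstep_kernel :: "('a pmf \<Rightarrow> 'a \<Rightarrow> 'a pmf) \<Rightarrow> nat \<Rightarrow> 'a pmf \<Rightarrow> 'a \<Rightarrow> 'a pmf" where
  "kstep_kernel P k \<mu> x = kern_iter P k \<mu> (return_pmf x)"

definition nonlinear_markov_chain ::
  "'b measure \<Rightarrow> ('a pmf \<Rightarrow> 'a \<Rightarrow> 'a pmf) \<Rightarrow> 'a pmf \<Rightarrow> (nat \<Rightarrow> 'b \<Rightarrow> 'a) \<Rightarrow> bool" where
  "nonlinear_markov_chain M P \<mu> X \<longleftrightarrow>
     prob_space M \<and> (\<forall>n. X n \<in> measurable M (count_space UNIV)) \<and>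
     (\<forall>n (x :: nat \<Rightarrow> 'a).
        measure M {\<omega> \<in> space M. \<forall>i\<le>n. X i \<omega> = x i}
        = pmf \<mu> (x 0) * (\<Prod>i<n. pmf (P (law_at P \<mu> i) (x i)) (x (Suc i))))"

definition conv_in_prob :: "'b measure \<Rightarrow> (nat \<Rightarrow> 'b \<Rightarrow> real) \<Rightarrow> real \<Rightarrow> bool" where
  "conv_in_prob M Y c \<longleftrightarrow>
     (\<forall>\<epsilon>>0. (\<lambda>n. measure M {\<omega> \<in> space M. \<bar>Y n \<omega> - c\<bar> > \<epsilon>}) \<longlonglongrightarrow> 0)"

end

theory Submission
  imports Defs
begin

lemma pmf_bind_fin:
  fixes p :: "'a::finite pmf"
  shows "pmf (bind_pmf p f) y = (\<Sum>x\<in>UNIV. pmf p x * pmf (f x) y)"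
  unfolding pmf_bind by (subst integral_measure_pmf_real[of UNIV]) (auto simp: mult.commute)

lemma sum_pmf_UNIV: "(\<Sum>x\<in>(UNIV::'a::finite set). pmf p x) = 1"
  by (rule sum_pmf_eq_1) auto

lemma expectation_fin:
  fixes p :: "'a::finite pmf"
  shows "measure_pmf.expectation p g = (\<Sum>x\<in>UNIV. pmf p x * g x)"
  by (subst integral_measure_pmf_real[of UNIV]) (auto simp: mult.commute)

lemma prob_fin:
  fixes p :: "'a::finite pmf"
  shows "measure_pmf.prob p A = (\<Sum>x\<in>A. pmf p x)"
  by (simp add: measure_measure_pmf_finite)

lemma tv_norm_L1:
  fixes p q :: "'a::finite pmf"
  shows "tv_norm p q = (\<Sum>x\<in>UNIV. \<bar>pmf p x - pmf q x\<bar>)"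
proof -
  let ?d = "\<lambda>x. pmf p x - pmf q x"
  have s0: "(\<Sum>x\<in>UNIV. ?d x) = 0"
    by (simp add: sum_subtractf sum_pmf_UNIV)
  have abs_eq: "\<bar>?d x\<bar> = 2 * max (?d x) 0 - ?d x" for x by (auto simp: max_def abs_if)
  have half: "(\<Sum>x\<in>UNIV. \<bar>?d x\<bar>) = 2 * (\<Sum>x\<in>UNIV. max (?d x) 0)"
    using s0 by (simp add: abs_eq sum_subtractf sum_distrib_left[symmetric] sum_pmf_UNIV)
  have negp: "(\<Sum>x\<in>UNIV. max (- ?d x) 0) = (\<Sum>x\<in>UNIV. max (?d x) 0)"
  proof -
    have "max (- ?d x) 0 = max (?d x) 0 - ?d x" for x by (auto simp: max_def abs_if)
    thus ?thesis using s0 by (simp add: sum_subtractf sum_pmf_UNIV)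
  qed
  have diffA: "measure_pmf.prob p A - measure_pmf.prob q A = (\<Sum>x\<in>A. ?d x)" for A
    by (simp add: prob_fin sum_subtractf)
  have bnd: "\<bar>measure_pmf.prob p A - measure_pmf.prob q A\<bar> \<le> (\<Sum>x\<in>UNIV. max (?d x) 0)" for A
  proof -
    have "(\<Sum>x\<in>A. ?d x) \<le> (\<Sum>x\<in>A. max (?d x) 0)" by (rule sum_mono) auto
    also have "\<dots> \<le> (\<Sum>x\<in>UNIV. max (?d x) 0)" by (rule sum_mono2) auto
    finally have 1: "(\<Sum>x\<in>A. ?d x) \<le> (\<Sum>x\<in>UNIV. max (?d x) 0)" .
    have "- (\<Sum>x\<in>A. ?d x) = (\<Sum>x\<in>A. - ?d x)" by (simp add: sum_negf[symmetric])
    also have "\<dots> \<le> (\<Sum>x\<in>A. max (- ?d x) 0)" by (rule sum_mono) auto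
    also have "\<dots> \<le> (\<Sum>x\<in>UNIV. max (- ?d x) 0)" by (rule sum_mono2) auto
    finally have 2: "- (\<Sum>x\<in>A. ?d x) \<le> (\<Sum>x\<in>UNIV. max (?d x) 0)" using negp by simp
    show ?thesis using 1 2 diffA by (simp add: abs_le_iff)
  qed
  let ?B = "{x. ?d x > 0}"
  have att: "\<bar>measure_pmf.prob p ?B - measure_pmf.prob q ?B\<bar> = (\<Sum>x\<in>UNIV. max (?d x) 0)"
  proof -
    have "(\<Sum>x\<in>?B. ?d x) = (\<Sum>x\<in>?B. max (?d x) 0)" by (rule sum.cong) auto
    also have "\<dots> = (\<Sum>x\<in>UNIV. max (?d x) 0)" by (rule sum.mono_neutral_left) auto
    finally show ?thesis using diffA[of ?B] by (simp add: sum_nonneg)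
  qed
  have "(SUP A. \<bar>measure_pmf.prob p A - measure_pmf.prob q A\<bar>) = (\<Sum>x\<in>UNIV. max (?d x) 0)"
  proof (rule antisym)
    show "(SUP A. \<bar>measure_pmf.prob p A - measure_pmf.prob q A\<bar>) \<le> (\<Sum>x\<in>UNIV. max (?d x) 0)"
      by (rule cSUP_least) (auto intro: bnd)
    show "(\<Sum>x\<in>UNIV. max (?d x) 0) \<le> (SUP A. \<bar>measure_pmf.prob p A - measure_pmf.prob q A\<bar>)"
      unfolding att[symmetric] by (rule cSUP_upper) (auto intro!: bdd_aboveI2 bnd)
  qed
  thus ?thesis unfolding tv_norm_def half by simp
qed

definition Kop :: "('a pmf \<Rightarrow> 'a \<Rightarrow> 'a pmf) \<Rightarrow> 'a pmf \<Rightarrow> nat \<Rightarrow> ('a::finite \<Rightarrow> real) \<Rightarrow> 'a \<Rightarrow> real" where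
  "Kop P \<mu> j \<psi> x = (\<Sum>y\<in>UNIV. pmf (P (law_at P \<mu> j) x) y * \<psi> y)"

definition ip :: "'a::finite pmf \<Rightarrow> ('a \<Rightarrow> real) \<Rightarrow> real" where
  "ip p f = (\<Sum>x\<in>UNIV. pmf p x * f x)"

fun Vop :: "('a pmf \<Rightarrow> 'a \<Rightarrow> 'a pmf) \<Rightarrow> 'a pmf \<Rightarrow> nat \<Rightarrow> nat \<Rightarrow> ('a::finite \<Rightarrow> real) \<Rightarrow> 'a \<Rightarrow> real" where
  "Vop P \<mu> i 0 \<psi> = \<psi>"
| "Vop P \<mu> i (Suc d) \<psi> = Kop P \<mu> i (Vop P \<mu> (Suc i) d \<psi>)"

lemma law_at_Suc: "law_at P \<mu> (Suc j) = bind_pmf (law_at P \<mu> j) (P (law_at P \<mu> j))"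
  by (simp add: law_at_def law_step_def)

lemma ip_Kop: "ip (law_at P \<mu> j) (Kop P \<mu> j \<psi>) = ip (law_at P \<mu> (Suc j)) \<psi>"
proof -
  have "ip (law_at P \<mu> (Suc j)) \<psi> = (\<Sum>y\<in>UNIV. (\<Sum>x\<in>UNIV. pmf (law_at P \<mu> j) x * pmf (P (law_at P \<mu> j) x) y) * \<psi> y)"
    unfolding ip_def law_at_Suc pmf_bind_fin ..
  also have "\<dots> = (\<Sum>x\<in>UNIV. pmf (law_at P \<mu> j) x * (\<Sum>y\<in>UNIV. pmf (P (law_at P \<mu> j) x) y * \<psi> y))"
    by (simp add: sum_distrib_left sum_distrib_right mult.assoc) (rule sum.swap)
  finally show ?thesis unfolding ip_def Kop_def by simp
qed

lemma Vop_right: "Vop P \<mu> i (Suc d) \<psi> = Vop P \<mu> i d (Kop P \<mu> (i + d) \<psi>)"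
  by (induction d arbitrary: i) auto

lemma Vop_comp: "Vop P \<mu> i (a + b) \<psi> = Vop P \<mu> i a (Vop P \<mu> (i + a) b \<psi>)"
  by (induction a arbitrary: i) auto

lemma ip_Vop: "ip (law_at P \<mu> i) (Vop P \<mu> i d \<psi>) = ip (law_at P \<mu> (i + d)) \<psi>"
  by (induction d arbitrary: i) (auto simp: ip_Kop)

lemma kern_iter_Vop:
  "(\<Sum>y\<in>UNIV. pmf (kern_iter P d (law_at P \<mu> i) \<nu>) y * \<psi> y) = (\<Sum>x\<in>UNIV. pmf \<nu> x * Vop P \<mu> i d \<psi> x)"
proof (induction d arbitrary: i \<nu>)
  case 0 then show ?case by simp
next
  case (Suc d)
  have ls: "law_step P (law_at P \<mu> i) = law_at P \<mu> (Suc i)"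
    by (simp add: law_at_def)
  have "(\<Sum>y\<in>UNIV. pmf (kern_iter P (Suc d) (law_at P \<mu> i) \<nu>) y * \<psi> y)
     = (\<Sum>x\<in>UNIV. pmf (bind_pmf \<nu> (P (law_at P \<mu> i))) x * Vop P \<mu> (Suc i) d \<psi> x)"
    using Suc[of "Suc i" "bind_pmf \<nu> (P (law_at P \<mu> i))"] by (simp add: ls)
  also have "\<dots> = (\<Sum>x\<in>UNIV. (\<Sum>z\<in>UNIV. pmf \<nu> z * pmf (P (law_at P \<mu> i) z) x) * Vop P \<mu> (Suc i) d \<psi> x)"
    by (simp add: pmf_bind_fin)
  also have "\<dots> = (\<Sum>z\<in>UNIV. pmf \<nu> z * Kop P \<mu> i (Vop P \<mu> (Suc i) d \<psi>) z)"
    unfolding Kop_def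
    by (simp add: sum_distrib_left sum_distrib_right mult.assoc) (rule sum.swap)
  finally show ?case by simp
qed

lemma kstep_Vop:
  "Vop P \<mu> i k \<psi> x = (\<Sum>y\<in>UNIV. pmf (kstep_kernel P k (law_at P \<mu> i) x) y * \<psi> y)"
  unfolding kstep_kernel_def kern_iter_Vop by (simp add: pmf_return)

lemma kern_iter_bind:
  "kern_iter P n \<rho> \<nu> = bind_pmf \<nu> (\<lambda>x. kern_iter P n \<rho> (return_pmf x))"
proof (induction n arbitrary: \<rho> \<nu>)
  case 0 then show ?case by (simp add: bind_return_pmf')
next
  case (Suc n)
  show ?case
    apply (simp add: bind_return_pmf)
    apply (subst Suc, subst (2) Suc)
    apply (simp add: bind_assoc_pmf)
    done
qed

lemma kern_iter_diag: "kern_iter P n \<rho> \<rho> = (law_step P ^^ n) \<rho>"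
  by (induction n arbitrary: \<rho>) (auto simp: law_step_def funpow_Suc_right simp del: funpow.simps)

lemma kstep_eta: "kstep_kernel P k \<rho> = (\<lambda>x. kern_iter P k \<rho> (return_pmf x))"
  by (simp add: kstep_kernel_def fun_eq_iff)

lemma law_at_add: "law_at P \<mu> (j + k) = bind_pmf (law_at P \<mu> j) (kstep_kernel P k (law_at P \<mu> j))"
proof -
  have "law_at P \<mu> (j + k) = (law_step P ^^ k) (law_at P \<mu> j)"
    by (simp add: law_at_def add.commute[of j k] funpow_add)
  also have "\<dots> = kern_iter P k (law_at P \<mu> j) (law_at P \<mu> j)" by (simp add: kern_iter_diag)
  also have "\<dots> = bind_pmf (law_at P \<mu> j) (kstep_kernel P k (law_at P \<mu> j))"
    by (subst kern_iter_bind) (simp add: kstep_eta)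
  finally show ?thesis .
qed

lemma fix_kstep: assumes "law_step P \<pi> = \<pi>"
  shows "bind_pmf \<pi> (kstep_kernel P k \<pi>) = \<pi>"
proof -
  have "(law_step P ^^ n) \<pi> = \<pi>" for n using assms by (induction n) auto
  moreover have "kstep_kernel P k \<pi> = (\<lambda>x. kern_iter P k \<pi> (return_pmf x))"
    by (simp add: kstep_kernel_def fun_eq_iff)
  ultimately show ?thesis using kern_iter_diag[of P k \<pi>] kern_iter_bind[of P k \<pi> \<pi>]
    by simp
qed

definition osc_le :: "('a \<Rightarrow> real) \<Rightarrow> real \<Rightarrow> bool" where
  "osc_le f c \<longleftrightarrow> (\<forall>x y. \<bar>f x - f y\<bar> \<le> c)"

lemma pos_part_half:
  fixes d :: "'a::finite \<Rightarrow> real"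
  assumes "(\<Sum>x\<in>UNIV. d x) = 0"
  shows "(\<Sum>x\<in>UNIV. max (d x) 0) = (\<Sum>x\<in>UNIV. \<bar>d x\<bar>) / 2"
    and "(\<Sum>x\<in>UNIV. max (- d x) 0) = (\<Sum>x\<in>UNIV. \<bar>d x\<bar>) / 2"
proof -
  have e1: "max (d x) 0 = (\<bar>d x\<bar> + d x) / 2" for x by (auto simp: max_def abs_if)
  have e2: "max (- d x) 0 = (\<bar>d x\<bar> - d x) / 2" for x by (auto simp: max_def abs_if)
  show "(\<Sum>x\<in>UNIV. max (d x) 0) = (\<Sum>x\<in>UNIV. \<bar>d x\<bar>) / 2"
    unfolding e1 using assms by (simp add: sum_divide_distrib[symmetric] sum.distrib)
  show "(\<Sum>x\<in>UNIV. max (- d x) 0) = (\<Sum>x\<in>UNIV. \<bar>d x\<bar>) / 2"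
    unfolding e2 using assms by (simp add: sum_divide_distrib[symmetric] sum_subtractf)
qed

lemma osc_diff:
  fixes p q :: "'a::finite pmf"
  assumes "osc_le f c"
  shows "\<bar>\<Sum>y\<in>UNIV. (pmf p y - pmf q y) * f y\<bar> \<le> (\<Sum>y\<in>UNIV. \<bar>pmf p y - pmf q y\<bar>) / 2 * c"
proof -
  let ?d = "\<lambda>y. pmf p y - pmf q y"
  have "Min (range f) \<in> range f" by (rule Min_in) auto
  then obtain y0 where y0: "f y0 = Min (range f)" by (metis rangeE)
  have fy0: "f y0 \<le> f y" for y unfolding y0 by (rule Min_le) auto
  let ?g = "\<lambda>y. f y - f y0"
  have g0: "0 \<le> ?g y" for y using fy0 by simp
  have gc: "?g y \<le> c" for y using assms unfolding osc_le_def by (metis abs_le_iff)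
  have s0: "(\<Sum>y\<in>UNIV. ?d y) = 0" by (simp add: sum_subtractf sum_pmf_UNIV)
  have eq: "(\<Sum>y\<in>UNIV. ?d y * f y) = (\<Sum>y\<in>UNIV. ?d y * ?g y)"
  proof -
    have "(\<Sum>y\<in>UNIV. ?d y * ?g y) = (\<Sum>y\<in>UNIV. ?d y * f y) - (\<Sum>y\<in>UNIV. ?d y) * f y0"
      by (simp add: right_diff_distrib sum_subtractf sum_distrib_right[symmetric])
    thus ?thesis using s0 by simp
  qed
  have up: "(\<Sum>y\<in>UNIV. ?d y * ?g y) \<le> (\<Sum>y\<in>UNIV. max (?d y) 0) * c"
  proof -
    have "(\<Sum>y\<in>UNIV. ?d y * ?g y) \<le> (\<Sum>y\<in>UNIV. max (?d y) 0 * c)"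
    proof (rule sum_mono)
      fix y
      have "?d y * ?g y \<le> max (?d y) 0 * ?g y" using g0[of y] by (intro mult_right_mono) auto
      also have "\<dots> \<le> max (?d y) 0 * c" using gc[of y] by (intro mult_left_mono) auto
      finally show "?d y * ?g y \<le> max (?d y) 0 * c" .
    qed
    thus ?thesis by (simp add: sum_distrib_right)
  qed
  have lo: "- (\<Sum>y\<in>UNIV. ?d y * ?g y) \<le> (\<Sum>y\<in>UNIV. max (- ?d y) 0) * c"
  proof -
    have "- (\<Sum>y\<in>UNIV. ?d y * ?g y) = (\<Sum>y\<in>UNIV. (- ?d y) * ?g y)" by (simp add: sum_negf[symmetric] algebra_simps)
    also have "\<dots> \<le> (\<Sum>y\<in>UNIV. max (- ?d y) 0 * c)"
    proof (rule sum_mono)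
      fix y
      have "(- ?d y) * ?g y \<le> max (- ?d y) 0 * ?g y" using g0[of y] by (intro mult_right_mono) auto
      also have "\<dots> \<le> max (- ?d y) 0 * c" using gc[of y] by (intro mult_left_mono) auto
      finally show "(- ?d y) * ?g y \<le> max (- ?d y) 0 * c" .
    qed
    finally show ?thesis by (simp add: sum_distrib_right)
  qed
  note h = pos_part_half[OF s0]
  show ?thesis using up lo unfolding h eq abs_le_iff by linarith
qed

lemma L1_le_2:
  fixes p q :: "'a::finite pmf"
  shows "(\<Sum>y\<in>UNIV. \<bar>pmf p y - pmf q y\<bar>) \<le> 2"
proof -
  have "(\<Sum>y\<in>UNIV. \<bar>pmf p y - pmf q y\<bar>) \<le> (\<Sum>y\<in>UNIV. pmf p y + pmf q y)"
    by (rule sum_mono) (auto simp: abs_le_iff pmf_nonneg)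
  thus ?thesis by (simp add: sum.distrib sum_pmf_UNIV)
qed

lemma osc_nonneg: "osc_le f c \<Longrightarrow> 0 \<le> c"
  unfolding osc_le_def by (metis abs_ge_zero order.trans)

lemma osc_kernel:
  fixes R :: "'a::finite \<Rightarrow> 'a pmf"
  assumes "osc_le f c" and "\<And>x y. (\<Sum>z\<in>UNIV. \<bar>pmf (R x) z - pmf (R y) z\<bar>) \<le> 2 * r"
  shows "osc_le (\<lambda>x. \<Sum>z\<in>UNIV. pmf (R x) z * f z) (r * c)"
  unfolding osc_le_def
proof (intro allI)
  fix x y
  have c0: "0 \<le> c" using osc_nonneg[OF assms(1)] .
  have "\<bar>(\<Sum>z\<in>UNIV. pmf (R x) z * f z) - (\<Sum>z\<in>UNIV. pmf (R y) z * f z)\<bar>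
      = \<bar>\<Sum>z\<in>UNIV. (pmf (R x) z - pmf (R y) z) * f z\<bar>"
    by (simp add: sum_subtractf left_diff_distrib)
  also have "\<dots> \<le> (\<Sum>z\<in>UNIV. \<bar>pmf (R x) z - pmf (R y) z\<bar>) / 2 * c" by (rule osc_diff[OF assms(1)])
  also have "\<dots> \<le> r * c" using assms(2)[of x y] c0 by (intro mult_right_mono) auto
  finally show "\<bar>(\<Sum>z\<in>UNIV. pmf (R x) z * f z) - (\<Sum>z\<in>UNIV. pmf (R y) z * f z)\<bar> \<le> r * c" .
qed

lemma osc_Kop: "osc_le \<psi> c \<Longrightarrow> osc_le (Kop P \<mu> j \<psi>) c"
proof -
  assume a: "osc_le \<psi> c"
  have "osc_le (\<lambda>x. \<Sum>z\<in>UNIV. pmf (P (law_at P \<mu> j) x) z * \<psi> z) (1 * c)"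
    by (rule osc_kernel[OF a]) (simp add: L1_le_2)
  thus ?thesis unfolding Kop_def[abs_def] by simp
qed

lemma osc_Vop: "osc_le \<psi> c \<Longrightarrow> osc_le (Vop P \<mu> i d \<psi>) c"
  by (induction d arbitrary: i) (auto intro: osc_Kop)

lemma osc_block:
  assumes i: "\<forall>x y \<mu>' \<nu>'. tv_norm (kstep_kernel P k \<mu>' x) (kstep_kernel P k \<nu>' y) \<le> 2 * (1 - a)"
    and "osc_le \<psi> c"
  shows "osc_le (Vop P \<mu> i k \<psi>) ((1 - a) * c)"
proof -
  have "osc_le (\<lambda>x. \<Sum>y\<in>UNIV. pmf (kstep_kernel P k (law_at P \<mu> i) x) y * \<psi> y) ((1 - a) * c)"
    by (rule osc_kernel[OF assms(2)]) (use i in \<open>auto simp: tv_norm_L1\<close>)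
  moreover have "Vop P \<mu> i k \<psi> = (\<lambda>x. \<Sum>y\<in>UNIV. pmf (kstep_kernel P k (law_at P \<mu> i) x) y * \<psi> y)"
    by (simp add: fun_eq_iff kstep_Vop)
  ultimately show ?thesis by simp
qed

lemma osc_decay:
  assumes i: "\<forall>x y \<mu>' \<nu>'. tv_norm (kstep_kernel P k \<mu>' x) (kstep_kernel P k \<nu>' y) \<le> 2 * (1 - a)"
    and a: "a \<le> 1" and "osc_le \<psi> c"
  shows "q * k \<le> d \<Longrightarrow> osc_le (Vop P \<mu> i d \<psi>) ((1 - a) ^ q * c)"
proof (induction q arbitrary: i d)
  case 0 then show ?case using osc_Vop[OF assms(3)] by simp
next
  case (Suc q)
  then have "q * k \<le> d - k" "d = k + (d - k)" by auto
  then have "osc_le (Vop P \<mu> (i + k) (d - k) \<psi>) ((1 - a) ^ q * c)" using Suc.IH by blast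
  then have "osc_le (Vop P \<mu> i k (Vop P \<mu> (i + k) (d - k) \<psi>)) ((1 - a) * ((1 - a) ^ q * c))"
    by (rule osc_block[OF i])
  moreover have "Vop P \<mu> i d \<psi> = Vop P \<mu> i k (Vop P \<mu> (i + k) (d - k) \<psi>)"
    using Vop_comp[of P \<mu> i k "d - k" \<psi>] \<open>d = k + (d - k)\<close> by simp
  ultimately show ?case by (simp add: mult.assoc)
qed

lemma near_mean:
  fixes p :: "'a::finite pmf"
  assumes "osc_le f c"
  shows "\<bar>f x - ip p f\<bar> \<le> c"
proof -
  have "f x - ip p f = (\<Sum>y\<in>UNIV. pmf p y * (f x - f y))"
    by (simp add: ip_def right_diff_distrib sum_subtractf sum_distrib_right[symmetric] sum_pmf_UNIV)
  also have "\<bar>\<dots>\<bar> \<le> (\<Sum>y\<in>UNIV. pmf p y * c)"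
    by (rule order.trans[OF sum_abs], rule sum_mono)
       (use assms in \<open>auto simp: abs_mult osc_le_def pmf_nonneg intro: mult_left_mono\<close>)
  finally show ?thesis by (simp add: sum_distrib_right[symmetric] sum_pmf_UNIV)
qed

lemma L1_contract:
  fixes \<nu> \<nu>' :: "'a::finite pmf" and Q Q' :: "'a \<Rightarrow> 'a pmf"
  assumes cross: "\<And>x y. (\<Sum>z\<in>UNIV. \<bar>pmf (Q x) z - pmf (Q' y) z\<bar>) \<le> 2 * (1 - a)"
    and same: "\<And>x. (\<Sum>z\<in>UNIV. \<bar>pmf (Q x) z - pmf (Q' x) z\<bar>) \<le> l * D"
    and Ddef: "D = (\<Sum>x\<in>UNIV. \<bar>pmf \<nu> x - pmf \<nu>' x\<bar>)"
    and l: "0 \<le> l" "l \<le> a"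
  shows "(\<Sum>z\<in>UNIV. \<bar>pmf (bind_pmf \<nu> Q) z - pmf (bind_pmf \<nu>' Q') z\<bar>) \<le> D * (1 - a * D / 2)"
proof -
  define m where "m x = min (pmf \<nu> x) (pmf \<nu>' x)" for x
  define A where "A x = pmf \<nu> x - m x" for x
  define B where "B x = pmf \<nu>' x - m x" for x
  define \<delta> where "\<delta> = (\<Sum>x\<in>UNIV. A x)"
  have A0: "0 \<le> A x" and B0: "0 \<le> B x" and m0: "0 \<le> m x" for x
    by (auto simp: A_def B_def m_def pmf_nonneg)
  have sm: "(\<Sum>x\<in>UNIV. m x) = 1 - \<delta>"
    using sum_pmf_UNIV[of \<nu>] by (simp add: \<delta>_def A_def sum_subtractf)
  have sB: "(\<Sum>x\<in>UNIV. B x) = \<delta>"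
    using sum_pmf_UNIV[of \<nu>'] sm by (simp add: B_def sum_subtractf)
  have D2: "D = 2 * \<delta>"
  proof -
    have "\<bar>pmf \<nu> x - pmf \<nu>' x\<bar> = A x + B x" for x by (auto simp: A_def B_def m_def)
    then show ?thesis using sB by (simp add: Ddef sum.distrib \<delta>_def)
  qed
  have d1: "\<delta> \<le> 1" using sm sum_nonneg[of UNIV m] m0 by simp
  have d0: "0 \<le> \<delta>" unfolding \<delta>_def by (rule sum_nonneg) (simp add: A0)
  define T1 where "T1 z = (\<Sum>x\<in>UNIV. m x * (pmf (Q x) z - pmf (Q' x) z))" for z
  define T2 where "T2 z = (\<Sum>x\<in>UNIV. A x * pmf (Q x) z) - (\<Sum>y\<in>UNIV. B y * pmf (Q' y) z)" for z
  have dec: "pmf (bind_pmf \<nu> Q) z - pmf (bind_pmf \<nu>' Q') z = T1 z + T2 z" for z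
  proof -
    have "pmf \<nu> x = m x + A x" "pmf \<nu>' x = m x + B x" for x by (auto simp: A_def B_def)
    then show ?thesis
      by (simp add: pmf_bind_fin T1_def T2_def distrib_right sum.distrib right_diff_distrib sum_subtractf)
  qed
  have bT1: "(\<Sum>z\<in>UNIV. \<bar>T1 z\<bar>) \<le> (1 - \<delta>) * (l * D)"
  proof -
    have "(\<Sum>z\<in>UNIV. \<bar>T1 z\<bar>) \<le> (\<Sum>z\<in>UNIV. \<Sum>x\<in>UNIV. m x * \<bar>pmf (Q x) z - pmf (Q' x) z\<bar>)"
      unfolding T1_def by (rule sum_mono, rule order.trans[OF sum_abs]) (simp add: abs_mult m0)
    also have "\<dots> = (\<Sum>x\<in>UNIV. m x * (\<Sum>z\<in>UNIV. \<bar>pmf (Q x) z - pmf (Q' x) z\<bar>))"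
      by (subst sum.swap) (simp add: sum_distrib_left)
    also have "\<dots> \<le> (\<Sum>x\<in>UNIV. m x * (l * D))"
      by (rule sum_mono, rule mult_left_mono[OF same m0])
    also have "\<dots> = (1 - \<delta>) * (l * D)" by (simp add: sum_distrib_right[symmetric] sm)
    finally show ?thesis .
  qed
  have dT2: "\<delta> * T2 z = (\<Sum>x\<in>UNIV. \<Sum>y\<in>UNIV. A x * B y * (pmf (Q x) z - pmf (Q' y) z))" for z
  proof -
    have "(\<Sum>x\<in>UNIV. \<Sum>y\<in>UNIV. A x * B y * (pmf (Q x) z - pmf (Q' y) z))
        = (\<Sum>x\<in>UNIV. \<Sum>y\<in>UNIV. A x * B y * pmf (Q x) z) - (\<Sum>x\<in>UNIV. \<Sum>y\<in>UNIV. A x * B y * pmf (Q' y) z)"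
      by (simp add: right_diff_distrib sum_subtractf)
    also have "(\<Sum>x\<in>UNIV. \<Sum>y\<in>UNIV. A x * B y * pmf (Q x) z) = \<delta> * (\<Sum>x\<in>UNIV. A x * pmf (Q x) z)"
    proof -
      have e: "(\<Sum>y\<in>UNIV. A x * B y * pmf (Q x) z) = \<delta> * (A x * pmf (Q x) z)" for x
      proof -
        have "(\<Sum>y\<in>UNIV. A x * B y * pmf (Q x) z) = (\<Sum>y\<in>UNIV. B y) * (A x * pmf (Q x) z)"
          by (subst sum_distrib_right) (simp add: mult_ac)
        then show ?thesis using sB by simp
      qed
      show ?thesis by (simp only: e sum_distrib_left[symmetric])
    qed
    also have "(\<Sum>x\<in>UNIV. \<Sum>y\<in>UNIV. A x * B y * pmf (Q' y) z) = \<delta> * (\<Sum>y\<in>UNIV. B y * pmf (Q' y) z)"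
    proof -
      have "(\<Sum>x\<in>UNIV. \<Sum>y\<in>UNIV. A x * B y * pmf (Q' y) z) = (\<Sum>x\<in>UNIV. A x * (\<Sum>y\<in>UNIV. B y * pmf (Q' y) z))"
        by (simp add: sum_distrib_left mult_ac)
      then show ?thesis by (simp add: sum_distrib_right[symmetric] \<delta>_def)
    qed
    finally show ?thesis by (simp add: T2_def right_diff_distrib)
  qed
  have bT2': "\<delta> * (\<Sum>z\<in>UNIV. \<bar>T2 z\<bar>) \<le> \<delta> * (\<delta> * (2 * (1 - a)))"
  proof -
    have "\<delta> * (\<Sum>z\<in>UNIV. \<bar>T2 z\<bar>) = (\<Sum>z\<in>UNIV. \<bar>\<delta> * T2 z\<bar>)"
      using d0 by (simp add: sum_distrib_left abs_mult)
    also have "\<dots> \<le> (\<Sum>z\<in>UNIV. \<Sum>x\<in>UNIV. \<Sum>y\<in>UNIV. A x * B y * \<bar>pmf (Q x) z - pmf (Q' y) z\<bar>)"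
      unfolding dT2
      by (rule sum_mono, rule order.trans[OF sum_abs], rule sum_mono, rule order.trans[OF sum_abs])
         (simp add: abs_mult A0 B0)
    also have "\<dots> = (\<Sum>x\<in>UNIV. \<Sum>z\<in>UNIV. \<Sum>y\<in>UNIV. A x * B y * \<bar>pmf (Q x) z - pmf (Q' y) z\<bar>)"
      by (rule sum.swap)
    also have "\<dots> = (\<Sum>x\<in>UNIV. \<Sum>y\<in>UNIV. \<Sum>z\<in>UNIV. A x * B y * \<bar>pmf (Q x) z - pmf (Q' y) z\<bar>)"
      by (rule sum.cong[OF refl], rule sum.swap)
    also have "\<dots> = (\<Sum>x\<in>UNIV. \<Sum>y\<in>UNIV. A x * B y * (\<Sum>z\<in>UNIV. \<bar>pmf (Q x) z - pmf (Q' y) z\<bar>))"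
      by (simp add: sum_distrib_left)
    also have "\<dots> \<le> (\<Sum>x\<in>UNIV. \<Sum>y\<in>UNIV. A x * B y * (2 * (1 - a)))"
      by (intro sum_mono mult_left_mono cross) (simp add: A0 B0)
    also have "\<dots> = (\<Sum>x\<in>UNIV. A x * (\<delta> * (2 * (1 - a))))"
    proof (rule sum.cong[OF refl])
      fix x
      have "(\<Sum>y\<in>UNIV. A x * B y * (2 * (1 - a))) = A x * (\<Sum>y\<in>UNIV. B y) * (2 * (1 - a))"
        by (simp add: sum_distrib_left sum_distrib_right mult.assoc)
      then show "(\<Sum>y\<in>UNIV. A x * B y * (2 * (1 - a))) = A x * (\<delta> * (2 * (1 - a)))"
        using sB by (simp add: mult.assoc)
    qed
    also have "\<dots> = \<delta> * (\<delta> * (2 * (1 - a)))"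
      by (simp add: \<delta>_def sum_distrib_right)
    finally show ?thesis .
  qed
  have bT2: "(\<Sum>z\<in>UNIV. \<bar>T2 z\<bar>) \<le> \<delta> * (2 * (1 - a))"
  proof (cases "\<delta> = 0")
    case True
    then have "A x = 0" for x using A0 unfolding \<delta>_def
      by (metis finite sum_nonneg_eq_0_iff UNIV_I)
    moreover have "B x = 0" for x using B0 sB True
      by (metis finite sum_nonneg_eq_0_iff UNIV_I)
    ultimately show ?thesis using True by (simp add: T2_def)
  next
    case False
    then have "0 < \<delta>" using d0 by simp
    then show ?thesis using bT2' by simp
  qed
  have "(\<Sum>z\<in>UNIV. \<bar>pmf (bind_pmf \<nu> Q) z - pmf (bind_pmf \<nu>' Q') z\<bar>) \<le> (\<Sum>z\<in>UNIV. \<bar>T1 z\<bar> + \<bar>T2 z\<bar>)"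
    unfolding dec by (rule sum_mono) (rule abs_triangle_ineq)
  also have "\<dots> \<le> (1 - \<delta>) * (l * D) + \<delta> * (2 * (1 - a))"
    using bT1 bT2 by (simp add: sum.distrib)
  also have "\<dots> \<le> (1 - \<delta>) * (a * D) + \<delta> * (2 * (1 - a))"
    using d1 l D2 d0 by (intro add_mono mult_left_mono mult_right_mono) auto
  also have "\<dots> = D * (1 - a * D / 2)" using D2 by (simp add: algebra_simps)
  finally show ?thesis .
qed

lemma law_contract:
  fixes P :: "('a::finite) pmf \<Rightarrow> 'a \<Rightarrow> 'a pmf"
  assumes i: "\<forall>x y \<mu>' \<nu>'. tv_norm (kstep_kernel P k \<mu>' x) (kstep_kernel P k \<nu>' y) \<le> 2 * (1 - a)"
    and ii: "0 \<le> l" "l \<le> a"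
      "\<forall>x \<mu>' \<nu>'. tv_norm (kstep_kernel P k \<mu>' x) (kstep_kernel P k \<nu>' x) \<le> l * tv_norm \<mu>' \<nu>'"
    and inv: "law_step P \<pi> = \<pi>"
  shows "tv_norm (law_at P \<mu> (j + k)) \<pi> \<le> tv_norm (law_at P \<mu> j) \<pi> * (1 - a * tv_norm (law_at P \<mu> j) \<pi> / 2)"
proof -
  have "tv_norm (law_at P \<mu> (j + k)) \<pi>
     = (\<Sum>z\<in>UNIV. \<bar>pmf (bind_pmf (law_at P \<mu> j) (kstep_kernel P k (law_at P \<mu> j))) z
                    - pmf (bind_pmf \<pi> (kstep_kernel P k \<pi>)) z\<bar>)"
    unfolding tv_norm_L1 law_at_add fix_kstep[OF inv] ..
  also have "\<dots> \<le> tv_norm (law_at P \<mu> j) \<pi> * (1 - a * tv_norm (law_at P \<mu> j) \<pi> / 2)"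
    by (rule L1_contract[where l = l])
       (use i ii in \<open>auto simp: tv_norm_L1[symmetric]\<close>)
  finally show ?thesis .
qed

lemma decay_to_zero:
  fixes s :: "nat \<Rightarrow> real"
  assumes s0: "\<And>n. 0 \<le> s n" and a: "0 < a"
    and rec: "\<And>n. s (Suc n) \<le> s n * (1 - a * s n / 2)"
  shows "s \<longlonglongrightarrow> 0"
proof -
  have "s (Suc n) \<le> s n" for n
  proof -
    have "s n * (1 - a * s n / 2) = s n - a * (s n * s n) / 2" by (simp add: algebra_simps)
    moreover have "0 \<le> a * (s n * s n)" using a s0[of n] by simp
    ultimately show ?thesis using rec[of n] by linarith
  qed
  then have "decseq s" by (rule decseq_SucI)
  then obtain L where L: "s \<longlonglongrightarrow> L" "\<And>i. L \<le> s i"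
    using decseq_convergent[of s 0] s0 by blast
  have L0: "0 \<le> L" using L(1) s0 by (intro LIMSEQ_le_const) auto
  have "(\<lambda>n. s (Suc n)) \<longlonglongrightarrow> L" using L(1) by (rule LIMSEQ_Suc)
  moreover have "(\<lambda>n. s n * (1 - a * s n / 2)) \<longlonglongrightarrow> L * (1 - a * L / 2)"
    using L(1) by (intro tendsto_intros) auto
  ultimately have "L \<le> L * (1 - a * L / 2)"
    by (rule LIMSEQ_le) (use rec in auto)
  then have "a * (L * L) \<le> 0" by (simp add: algebra_simps)
  then have "L * L \<le> 0" using a by (simp add: mult_le_0_iff)
  then have "L = 0" using L0 by (metis mult_eq_0_iff mult_nonneg_nonneg order.antisym)
  then show ?thesis using L(1) by simp
qed

lemma div_filterlim: "0 < (k::nat) \<Longrightarrow> filterlim (\<lambda>j. j div k) at_top sequentially"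
  unfolding filterlim_at_top eventually_sequentially
  by (metis div_le_mono div_mult_self_is_m)

lemma residues_to_zero:
  fixes d :: "nat \<Rightarrow> real"
  assumes k: "0 < k" and d0: "\<And>j. 0 \<le> d j"
    and r: "\<And>r. (\<lambda>n. d (r + n * k)) \<longlonglongrightarrow> 0"
  shows "d \<longlonglongrightarrow> 0"
proof -
  define S where "S n = (\<Sum>r<k. d (r + n * k))" for n
  have S: "S \<longlonglongrightarrow> 0" unfolding S_def using r by (intro tendsto_null_sum) auto
  have "(\<lambda>j. S (j div k)) \<longlonglongrightarrow> 0" by (rule filterlim_compose[OF S div_filterlim[OF k]])
  moreover have "d j \<le> S (j div k)" for j
  proof -
    have "j = j mod k + (j div k) * k" by simp
    then have "d j = d (j mod k + (j div k) * k)" by simp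
    also have "\<dots> \<le> S (j div k)" unfolding S_def
      by (rule member_le_sum) (use k d0 in auto)
    finally show ?thesis .
  qed
  ultimately show ?thesis
    by (intro tendsto_sandwich[of "\<lambda>_. 0" d sequentially "\<lambda>j. S (j div k)"]) (auto simp: d0)
qed

lemma cesaro:
  fixes a :: "nat \<Rightarrow> real"
  assumes "a \<longlonglongrightarrow> 0"
  shows "(\<lambda>n. (\<Sum>j<n. \<bar>a j\<bar>) / real n) \<longlonglongrightarrow> 0"
proof (rule LIMSEQ_I)
  fix \<epsilon> :: real assume e: "0 < \<epsilon>"
  obtain N0 where N0: "\<And>j. j \<ge> N0 \<Longrightarrow> \<bar>a j\<bar> < \<epsilon> / 2"
    using LIMSEQ_D[OF assms, of "\<epsilon>/2"] e by auto
  define C where "C = (\<Sum>j<N0. \<bar>a j\<bar>)"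
  have C0: "0 \<le> C" unfolding C_def by (rule sum_nonneg) auto
  define N where "N = max (Suc N0) (nat \<lceil>2 * C / \<epsilon>\<rceil> + 1)"
  show "\<exists>no. \<forall>n\<ge>no. norm ((\<Sum>j<n. \<bar>a j\<bar>) / real n - 0) < \<epsilon>"
  proof (intro exI allI impI)
    fix n assume n: "N \<le> n"
    then have npos: "0 < real n" unfolding N_def by auto
    have "(\<Sum>j<n. \<bar>a j\<bar>) \<le> (\<Sum>j<n. (if j < N0 then \<bar>a j\<bar> else 0) + \<epsilon> / 2)"
      by (rule sum_mono) (use N0 e in \<open>auto simp: not_less less_imp_le\<close>)
    also have "\<dots> = (\<Sum>j<n. (if j < N0 then \<bar>a j\<bar> else 0)) + n * (\<epsilon> / 2)"
      by (simp add: sum.distrib)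
    also have "(\<Sum>j<n. (if j < N0 then \<bar>a j\<bar> else 0)) = C"
    proof -
      have "(\<Sum>j<n. (if j < N0 then \<bar>a j\<bar> else 0)) = (\<Sum>j\<in>{..<n} \<inter> {..<N0}. \<bar>a j\<bar>)"
        by (simp add: sum.If_cases Int_def)
      also have "{..<n} \<inter> {..<N0} = {..<N0}" using n unfolding N_def by auto
      finally show ?thesis by (simp add: C_def)
    qed
    finally have sb: "(\<Sum>j<n. \<bar>a j\<bar>) \<le> C + n * (\<epsilon> / 2)" .
    have "2 * C / \<epsilon> < real n"
    proof -
      have "2 * C / \<epsilon> \<le> real (nat \<lceil>2 * C / \<epsilon>\<rceil>)" by linarith
      also have "\<dots> < real n" using n unfolding N_def by auto
      finally show ?thesis .
    qed
    then have "2 * C < \<epsilon> * real n" using e by (simp add: field_simps)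
    then have "C + n * (\<epsilon> / 2) < \<epsilon> * n" by (simp add: field_simps)
    then have "(\<Sum>j<n. \<bar>a j\<bar>) < \<epsilon> * n" using sb by linarith
    then have "(\<Sum>j<n. \<bar>a j\<bar>) / real n < \<epsilon>" using npos by (simp add: field_simps)
    moreover have "0 \<le> (\<Sum>j<n. \<bar>a j\<bar>) / real n" by (simp add: sum_nonneg)
    ultimately show "norm ((\<Sum>j<n. \<bar>a j\<bar>) / real n - 0) < \<epsilon>" by simp
  qed
qed

lemma law_to_pi:
  fixes P :: "('a::finite) pmf \<Rightarrow> 'a \<Rightarrow> 'a pmf"
  assumes k: "k \<ge> 1" and a: "0 < a"
    and i: "\<forall>x y \<mu>' \<nu>'. tv_norm (kstep_kernel P k \<mu>' x) (kstep_kernel P k \<nu>' y) \<le> 2 * (1 - a)"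
    and ii: "0 \<le> l" "l \<le> a"
      "\<forall>x \<mu>' \<nu>'. tv_norm (kstep_kernel P k \<mu>' x) (kstep_kernel P k \<nu>' x) \<le> l * tv_norm \<mu>' \<nu>'"
    and inv: "law_step P \<pi> = \<pi>"
  shows "(\<lambda>j. tv_norm (law_at P \<mu> j) \<pi>) \<longlonglongrightarrow> 0"
proof (rule residues_to_zero)
  show "0 < k" using k by simp
  show "0 \<le> tv_norm (law_at P \<mu> j) \<pi>" for j by (simp add: tv_norm_L1 sum_nonneg)
  fix r
  show "(\<lambda>n. tv_norm (law_at P \<mu> (r + n * k)) \<pi>) \<longlonglongrightarrow> 0"
  proof (rule decay_to_zero[OF _ a])
    show "0 \<le> tv_norm (law_at P \<mu> (r + n * k)) \<pi>" for n by (simp add: tv_norm_L1 sum_nonneg)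
    fix n
    have e: "r + Suc n * k = (r + n * k) + k" by simp
    show "tv_norm (law_at P \<mu> (r + Suc n * k)) \<pi>
      \<le> tv_norm (law_at P \<mu> (r + n * k)) \<pi> * (1 - a * tv_norm (law_at P \<mu> (r + n * k)) \<pi> / 2)"
      unfolding e by (rule law_contract[OF i ii inv])
  qed
qed

definition wt :: "('a pmf \<Rightarrow> 'a \<Rightarrow> 'a pmf) \<Rightarrow> 'a pmf \<Rightarrow> nat \<Rightarrow> 'a list \<Rightarrow> real" where
  "wt P \<mu> m xs = pmf \<mu> (xs ! 0) * (\<Prod>i<m. pmf (P (law_at P \<mu> i) (xs ! i)) (xs ! Suc i))"

definition Lm :: "nat \<Rightarrow> 'a list set" where
  "Lm m = {xs. length xs = Suc m}"

definition Ex :: "('a pmf \<Rightarrow> 'a \<Rightarrow> 'a pmf) \<Rightarrow> 'a pmf \<Rightarrow> nat \<Rightarrow> ('a list \<Rightarrow> real) \<Rightarrow> real" where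
  "Ex P \<mu> m G = (\<Sum>xs\<in>Lm m. wt P \<mu> m xs * G xs)"

lemma finite_Lm: "finite (Lm m :: 'a::finite list set)"
proof -
  have "Lm m = {xs::'a list. set xs \<subseteq> UNIV \<and> length xs = Suc m}" by (auto simp: Lm_def)
  then show ?thesis using finite_lists_length_eq[of "UNIV::'a set" "Suc m"] by simp
qed

lemma wt_nonneg: "0 \<le> wt P \<mu> m xs"
  unfolding wt_def by (intro mult_nonneg_nonneg prod_nonneg) auto

lemma Lm_Suc: "Lm (Suc m) = (\<lambda>(xs, y). xs @ [y]) ` (Lm m \<times> UNIV)"
  by (auto simp: Lm_def length_Suc_conv_rev image_iff)

lemma Lm_0: "Lm 0 = (\<lambda>x. [x]) ` UNIV"
  by (auto simp: Lm_def length_Suc_conv)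

lemma wt_Suc:
  assumes "xs \<in> Lm m"
  shows "wt P \<mu> (Suc m) (xs @ [y]) = wt P \<mu> m xs * pmf (P (law_at P \<mu> m) (last xs)) y"
proof -
  have len: "length xs = Suc m" using assms by (simp add: Lm_def)
  have a: "(xs @ [y]) ! i = xs ! i" if "i \<le> m" for i using that len by (simp add: nth_append)
  have b: "(xs @ [y]) ! Suc m = y" using len by (simp add: nth_append)
  have c: "last xs = xs ! m" using len by (subst last_conv_nth) auto
  have "(\<Prod>i<m. pmf (P (law_at P \<mu> i) ((xs @ [y]) ! i)) ((xs @ [y]) ! Suc i))
      = (\<Prod>i<m. pmf (P (law_at P \<mu> i) (xs ! i)) (xs ! Suc i))"
    by (rule prod.cong) (auto simp: a)
  then show ?thesis unfolding wt_def using a[of 0] b c by (simp add: a mult_ac)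
qed

lemma Ex_0: "Ex P \<mu> 0 G = (\<Sum>x\<in>UNIV. pmf \<mu> x * G [x])"
  unfolding Ex_def Lm_0 by (subst sum.reindex) (auto simp: inj_on_def wt_def)

lemma Ex_Suc:
  "Ex P \<mu> (Suc m) G = Ex P \<mu> m (\<lambda>xs. \<Sum>y\<in>UNIV. pmf (P (law_at P \<mu> m) (last xs)) y * G (xs @ [y]))"
proof -
  have inj: "inj_on (\<lambda>(xs, y). xs @ [y]) (Lm m \<times> (UNIV::'a set))"
    by (auto simp: inj_on_def)
  have "Ex P \<mu> (Suc m) G = (\<Sum>p\<in>Lm m \<times> UNIV. wt P \<mu> (Suc m) (fst p @ [snd p]) * G (fst p @ [snd p]))"
    unfolding Ex_def Lm_Suc by (subst sum.reindex[OF inj]) (simp add: case_prod_beta)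
  also have "\<dots> = (\<Sum>xs\<in>Lm m. \<Sum>y\<in>UNIV. wt P \<mu> (Suc m) (xs @ [y]) * G (xs @ [y]))"
    by (subst sum.cartesian_product) (simp add: case_prod_beta)
  also have "\<dots> = (\<Sum>xs\<in>Lm m. wt P \<mu> m xs * (\<Sum>y\<in>UNIV. pmf (P (law_at P \<mu> m) (last xs)) y * G (xs @ [y])))"
    by (rule sum.cong[OF refl]) (simp add: wt_Suc sum_distrib_left mult_ac)
  finally show ?thesis unfolding Ex_def .
qed

lemma Ex_add: "Ex P \<mu> m (\<lambda>xs. f xs + g xs) = Ex P \<mu> m f + Ex P \<mu> m g"
  unfolding Ex_def by (simp add: distrib_left sum.distrib)

lemma Ex_cmult: "Ex P \<mu> m (\<lambda>xs. c * f xs) = c * Ex P \<mu> m f"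
  unfolding Ex_def by (simp add: sum_distrib_left mult_ac)

lemma Ex_cong: "(\<And>xs. xs \<in> Lm m \<Longrightarrow> f xs = g xs) \<Longrightarrow> Ex P \<mu> m f = Ex P \<mu> m g"
  unfolding Ex_def by (rule sum.cong) auto

lemma Ex_mono: "(\<And>xs. xs \<in> Lm m \<Longrightarrow> f xs \<le> g xs) \<Longrightarrow> Ex P \<mu> m f \<le> Ex P \<mu> m g"
  unfolding Ex_def by (rule sum_mono) (auto intro: mult_left_mono wt_nonneg)

lemma sum_pmf_kernel: "(\<Sum>y\<in>UNIV. pmf (p::'a::finite pmf) y * c) = c"
  by (simp add: sum_distrib_right[symmetric] sum_pmf_UNIV)

lemma Ex_last: "Ex P \<mu> m (\<lambda>xs. \<psi> (last xs)) = ip (law_at P \<mu> m) \<psi>"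
proof (induction m arbitrary: \<psi>)
  case 0 then show ?case by (simp add: Ex_0 ip_def law_at_def)
next
  case (Suc m)
  have "Ex P \<mu> (Suc m) (\<lambda>xs. \<psi> (last xs)) = Ex P \<mu> m (\<lambda>xs. Kop P \<mu> m \<psi> (last xs))"
    unfolding Ex_Suc Kop_def by simp
  also have "\<dots> = ip (law_at P \<mu> (Suc m)) \<psi>" by (simp add: Suc ip_Kop)
  finally show ?case .
qed

definition Tsum :: "('a \<Rightarrow> real) \<Rightarrow> 'a list \<Rightarrow> real" where
  "Tsum h xs = sum_list (map h xs)"

lemma B_formula:
  "Ex P \<mu> m (\<lambda>xs. Tsum h xs * \<psi> (last xs))
    = (\<Sum>i\<le>m. ip (law_at P \<mu> i) (\<lambda>x. h x * Vop P \<mu> i (m - i) \<psi> x))"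
proof (induction m arbitrary: \<psi>)
  case 0 then show ?case by (simp add: Ex_0 ip_def law_at_def Tsum_def)
next
  case (Suc m)
  have "Ex P \<mu> (Suc m) (\<lambda>xs. Tsum h xs * \<psi> (last xs))
     = Ex P \<mu> m (\<lambda>xs. Tsum h xs * Kop P \<mu> m \<psi> (last xs) + Kop P \<mu> m (\<lambda>y. h y * \<psi> y) (last xs))"
    unfolding Ex_Suc
    by (rule Ex_cong) (simp add: Tsum_def Kop_def distrib_left distrib_right sum.distrib sum_distrib_left mult_ac)
  also have "\<dots> = (\<Sum>i\<le>m. ip (law_at P \<mu> i) (\<lambda>x. h x * Vop P \<mu> i (m - i) (Kop P \<mu> m \<psi>) x))
                  + ip (law_at P \<mu> (Suc m)) (\<lambda>y. h y * \<psi> y)"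
    by (simp add: Ex_add Suc Ex_last ip_Kop)
  also have "(\<Sum>i\<le>m. ip (law_at P \<mu> i) (\<lambda>x. h x * Vop P \<mu> i (m - i) (Kop P \<mu> m \<psi>) x))
      = (\<Sum>i\<le>m. ip (law_at P \<mu> i) (\<lambda>x. h x * Vop P \<mu> i (Suc m - i) \<psi> x))"
  proof (rule sum.cong[OF refl])
    fix i assume "i \<in> {..m}"
    then have "Suc m - i = Suc (m - i)" "i + (m - i) = m" by auto
    then show "ip (law_at P \<mu> i) (\<lambda>x. h x * Vop P \<mu> i (m - i) (Kop P \<mu> m \<psi>) x)
      = ip (law_at P \<mu> i) (\<lambda>x. h x * Vop P \<mu> i (Suc m - i) \<psi> x)"
      using Vop_right[of P \<mu> i "m - i" \<psi>] by simp
  qed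
  finally show ?case by simp
qed

lemma sq_expand:
  fixes p :: "'a::finite pmf"
  shows "(\<Sum>y\<in>UNIV. pmf p y * (t + f y)\<^sup>2)
     = t\<^sup>2 + 2 * (t * (\<Sum>y\<in>UNIV. pmf p y * f y)) + (\<Sum>y\<in>UNIV. pmf p y * (f y)\<^sup>2)"
proof -
  have "(\<Sum>y\<in>UNIV. pmf p y * (t + f y)\<^sup>2)
      = (\<Sum>y\<in>UNIV. t\<^sup>2 * pmf p y + 2 * t * (pmf p y * f y) + pmf p y * (f y)\<^sup>2)"
    by (rule sum.cong) (simp_all add: power2_sum algebra_simps)
  also have "\<dots> = t\<^sup>2 * (\<Sum>y\<in>UNIV. pmf p y) + 2 * t * (\<Sum>y\<in>UNIV. pmf p y * f y) + (\<Sum>y\<in>UNIV. pmf p y * (f y)\<^sup>2)"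
    by (simp add: sum.distrib sum_distrib_left)
  finally show ?thesis by (simp add: sum_pmf_UNIV mult.assoc)
qed

lemma V_Suc:
  "Ex P \<mu> (Suc m) (\<lambda>xs. (Tsum h xs)\<^sup>2)
   = Ex P \<mu> m (\<lambda>xs. (Tsum h xs)\<^sup>2) + 2 * Ex P \<mu> m (\<lambda>xs. Tsum h xs * Kop P \<mu> m h (last xs))
     + ip (law_at P \<mu> (Suc m)) (\<lambda>y. (h y)\<^sup>2)"
proof -
  have "Ex P \<mu> (Suc m) (\<lambda>xs. (Tsum h xs)\<^sup>2)
     = Ex P \<mu> m (\<lambda>xs. (Tsum h xs)\<^sup>2 + 2 * (Tsum h xs * Kop P \<mu> m h (last xs)) + Kop P \<mu> m (\<lambda>y. (h y)\<^sup>2) (last xs))"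
    unfolding Ex_Suc
    by (rule Ex_cong) (simp add: Tsum_def Kop_def sq_expand)
  then show ?thesis by (simp add: Ex_add Ex_cmult Ex_last ip_Kop)
qed

lemma abs_ip_bound:
  fixes p :: "'a::finite pmf"
  assumes hH: "\<And>x. \<bar>h x\<bar> \<le> H" and fF: "\<And>x. \<bar>f x\<bar> \<le> F"
  shows "\<bar>ip p (\<lambda>x. h x * f x)\<bar> \<le> H * F"
proof -
  have "\<bar>ip p (\<lambda>x. h x * f x)\<bar> \<le> (\<Sum>x\<in>UNIV. pmf p x * (H * F))"
    unfolding ip_def
  proof (rule order.trans[OF sum_abs], rule sum_mono)
    fix x
    have "\<bar>h x\<bar> * \<bar>f x\<bar> \<le> H * F"
      by (rule mult_mono[OF hH fF]) (use hH[of x] in auto)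
    then show "\<bar>pmf p x * (h x * f x)\<bar> \<le> pmf p x * (H * F)"
      by (simp add: abs_mult mult_left_mono)
  qed
  then show ?thesis by (simp add: sum_distrib_right[symmetric] sum_pmf_UNIV)
qed

lemma B_bound:
  fixes P :: "('a::finite) pmf \<Rightarrow> 'a \<Rightarrow> 'a pmf"
  assumes i: "\<forall>x y \<mu>' \<nu>'. tv_norm (kstep_kernel P k \<mu>' x) (kstep_kernel P k \<nu>' y) \<le> 2 * (1 - a)"
    and a: "a \<le> 1" and hH: "\<And>x. \<bar>h x\<bar> \<le> H"
  shows "\<bar>Ex P \<mu> m (\<lambda>xs. Tsum h xs * Kop P \<mu> m h (last xs))\<bar>
     \<le> H * (real (Suc m) * \<bar>ip (law_at P \<mu> (Suc m)) h\<bar> + 2 * H * (\<Sum>j<Suc m. (1 - a) ^ (j div k)))"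
proof -
  let ?\<psi> = "Kop P \<mu> m h"
  let ?e = "ip (law_at P \<mu> (Suc m)) h"
  have oh: "osc_le h (2 * H)" unfolding osc_le_def
    using hH by (metis abs_triangle_ineq4 add_mono mult_2 order.trans)
  have o\<psi>: "osc_le ?\<psi> (2 * H)" by (rule osc_Kop[OF oh])
  have trm: "\<bar>ip (law_at P \<mu> i) (\<lambda>x. h x * Vop P \<mu> i (m - i) ?\<psi> x)\<bar>
      \<le> H * (\<bar>?e\<bar> + (1 - a) ^ ((m - i) div k) * (2 * H))" if "i \<le> m" for i
  proof (rule abs_ip_bound[OF hH])
    fix x
    have q: "(m - i) div k * k \<le> m - i" by (rule div_times_less_eq_dividend)
    have ov: "osc_le (Vop P \<mu> i (m - i) ?\<psi>) ((1 - a) ^ ((m - i) div k) * (2 * H))"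
      by (rule osc_decay[OF i a o\<psi> q])
    have mean: "ip (law_at P \<mu> i) (Vop P \<mu> i (m - i) ?\<psi>) = ?e"
      using that by (simp add: ip_Vop ip_Kop)
    have "\<bar>Vop P \<mu> i (m - i) ?\<psi> x - ?e\<bar> \<le> (1 - a) ^ ((m - i) div k) * (2 * H)"
      using near_mean[OF ov, of x "law_at P \<mu> i"] mean by simp
    then show "\<bar>Vop P \<mu> i (m - i) ?\<psi> x\<bar> \<le> \<bar>?e\<bar> + (1 - a) ^ ((m - i) div k) * (2 * H)"
      by linarith
  qed
  have "\<bar>Ex P \<mu> m (\<lambda>xs. Tsum h xs * ?\<psi> (last xs))\<bar>
      = \<bar>\<Sum>i\<le>m. ip (law_at P \<mu> i) (\<lambda>x. h x * Vop P \<mu> i (m - i) ?\<psi> x)\<bar>"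
    by (simp add: B_formula)
  also have "\<dots> \<le> (\<Sum>i\<le>m. H * (\<bar>?e\<bar> + (1 - a) ^ ((m - i) div k) * (2 * H)))"
    by (rule order.trans[OF sum_abs], rule sum_mono) (simp add: trm)
  also have "\<dots> = H * (\<Sum>i\<le>m. (\<bar>?e\<bar> + (1 - a) ^ ((m - i) div k) * (2 * H)))"
    by (rule sum_distrib_left[symmetric])
  also have "(\<Sum>i\<le>m. (\<bar>?e\<bar> + (1 - a) ^ ((m - i) div k) * (2 * H)))
      = real (Suc m) * \<bar>?e\<bar> + (\<Sum>i\<le>m. (1 - a) ^ ((m - i) div k)) * (2 * H)"
    by (simp add: sum.distrib sum_distrib_right)
  also have "H * (real (Suc m) * \<bar>?e\<bar> + (\<Sum>i\<le>m. (1 - a) ^ ((m - i) div k)) * (2 * H))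
      = H * (real (Suc m) * \<bar>?e\<bar> + 2 * H * (\<Sum>i\<le>m. (1 - a) ^ ((m - i) div k)))"
    by (simp add: mult_ac)
  also have "(\<Sum>i\<le>m. (1 - a) ^ ((m - i) div k)) = (\<Sum>j<Suc m. (1 - a) ^ (j div k))"
  proof -
    have "(\<Sum>i\<le>m. (1 - a) ^ ((m - i) div k)) = (\<Sum>i<Suc m. (1 - a) ^ ((Suc m - Suc i) div k))"
      by (simp add: lessThan_Suc_atMost)
    also have "\<dots> = (\<Sum>j<Suc m. (1 - a) ^ (j div k))"
      by (rule sum.nat_diff_reindex)
    finally show ?thesis .
  qed
  finally show ?thesis .
qed

lemma V_bound:
  fixes P :: "('a::finite) pmf \<Rightarrow> 'a \<Rightarrow> 'a pmf"
  assumes i: "\<forall>x y \<mu>' \<nu>'. tv_norm (kstep_kernel P k \<mu>' x) (kstep_kernel P k \<nu>' y) \<le> 2 * (1 - a)"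
    and a: "a \<le> 1" and hH: "\<And>x. \<bar>h x\<bar> \<le> H"
  shows "Ex P \<mu> m (\<lambda>xs. (Tsum h xs)\<^sup>2)
     \<le> real (Suc m) * H\<^sup>2 + 2 * H * real m * (\<Sum>j<m. \<bar>ip (law_at P \<mu> (Suc j)) h\<bar>)
        + 4 * H\<^sup>2 * real m * (\<Sum>j<m. (1 - a) ^ (j div k))"
proof -
  have H0: "0 \<le> H" using hH[of undefined] by linarith
  have hsq: "(h x)\<^sup>2 \<le> H\<^sup>2" for x using power_mono[OF hH[of x] abs_ge_zero, of 2] by simp
  have ipsq: "ip p (\<lambda>x. (h x)\<^sup>2) \<le> H\<^sup>2" for p
  proof -
    have "ip p (\<lambda>x. (h x)\<^sup>2) \<le> (\<Sum>x\<in>UNIV. pmf p x * H\<^sup>2)"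
      unfolding ip_def by (rule sum_mono) (simp add: mult_left_mono hsq)
    then show ?thesis by (simp add: sum_distrib_right[symmetric] sum_pmf_UNIV)
  qed
  show ?thesis
proof (induction m)
  case 0
  have "Ex P \<mu> 0 (\<lambda>xs. (Tsum h xs)\<^sup>2) = ip (law_at P \<mu> 0) (\<lambda>x. (h x)\<^sup>2)"
    by (simp add: Ex_0 ip_def law_at_def Tsum_def)
  then show ?case using ipsq by simp
next
  case (Suc m)
  define E where "E = (\<Sum>j<m. \<bar>ip (law_at P \<mu> (Suc j)) h\<bar>)"
  define R where "R = (\<Sum>j<m. (1 - a) ^ (j div k))"
  define e where "e = \<bar>ip (law_at P \<mu> (Suc m)) h\<bar>"
  define \<rho> where "\<rho> = (1 - a) ^ (m div k)"
  have E0: "0 \<le> E" unfolding E_def by (simp add: sum_nonneg)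
  have \<rho>0: "0 \<le> \<rho>" unfolding \<rho>_def using a by simp
  have ES: "(\<Sum>j<Suc m. \<bar>ip (law_at P \<mu> (Suc j)) h\<bar>) = E + e" by (simp add: E_def e_def)
  have RS: "(\<Sum>j<Suc m. (1 - a) ^ (j div k)) = R + \<rho>" by (simp add: R_def \<rho>_def)
  have B: "\<bar>Ex P \<mu> m (\<lambda>xs. Tsum h xs * Kop P \<mu> m h (last xs))\<bar> \<le> H * (real (Suc m) * e + 2 * H * (R + \<rho>))"
    using B_bound[OF i a hH, of \<mu> m] unfolding e_def RS .
  have "Ex P \<mu> (Suc m) (\<lambda>xs. (Tsum h xs)\<^sup>2)
     \<le> (real (Suc m) * H\<^sup>2 + 2 * H * real m * E + 4 * H\<^sup>2 * real m * R)
        + 2 * (H * (real (Suc m) * e + 2 * H * (R + \<rho>))) + H\<^sup>2"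
    unfolding V_Suc using Suc.IH[folded E_def R_def] B ipsq[of "law_at P \<mu> (Suc m)"] by linarith
  also have "\<dots> = real (Suc (Suc m)) * H\<^sup>2 + 2 * H * real (Suc m) * (E + e)
        + 4 * H\<^sup>2 * real (Suc m) * (R + \<rho>) - (2 * H * E + 4 * H\<^sup>2 * real m * \<rho>)"
    by (simp add: algebra_simps power2_eq_square)
  also have "\<dots> \<le> real (Suc (Suc m)) * H\<^sup>2 + 2 * H * real (Suc m) * (E + e)
        + 4 * H\<^sup>2 * real (Suc m) * (R + \<rho>)"
  proof -
    have "0 \<le> 2 * H * E + 4 * H\<^sup>2 * real m * \<rho>"
      using H0 E0 \<rho>0 by (intro add_nonneg_nonneg mult_nonneg_nonneg) auto
    then show ?thesis by linarith
  qed
  finally show ?case unfolding ES RS .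
qed
qed

lemma cyl_eq:
  assumes "xs \<in> Lm m"
  shows "{\<omega>\<in>space M. map (\<lambda>i. X i \<omega>) [0..<Suc m] = xs} = {\<omega>\<in>space M. \<forall>i\<le>m. X i \<omega> = xs ! i}"
proof -
  have len: "length xs = Suc m" using assms by (simp add: Lm_def)
  have "map (\<lambda>i. X i \<omega>) [0..<Suc m] = xs \<longleftrightarrow> (\<forall>i\<le>m. X i \<omega> = xs ! i)" for \<omega>
    using len by (auto simp: list_eq_iff_nth_eq less_Suc_eq_le simp del: upt_Suc)
  then show ?thesis by auto
qed

lemma cyl_sets:
  assumes X: "\<And>n. X n \<in> measurable M (count_space UNIV)"
  shows "{\<omega>\<in>space M. \<forall>i\<le>(m::nat). X i \<omega> = v i} \<in> sets M"
proof -
  have one: "{\<omega>\<in>space M. X i \<omega> = v i} \<in> sets M" for i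
  proof -
    have "X i -` {v i} \<inter> space M \<in> sets M" by (rule measurable_sets[OF X]) simp
    moreover have "X i -` {v i} \<inter> space M = {\<omega>\<in>space M. X i \<omega> = v i}" by blast
    ultimately show ?thesis by metis
  qed
  have "{\<omega>\<in>space M. \<forall>i\<in>{..m}. X i \<omega> = v i} \<in> sets M"
    by (rule sets.sets_Collect_finite_All[OF one finite_atMost])
  moreover have "{\<omega>\<in>space M. \<forall>i\<in>{..m}. X i \<omega> = v i} = {\<omega>\<in>space M. \<forall>i\<le>m. X i \<omega> = v i}"
    unfolding Ball_def atMost_iff by (rule refl)
  ultimately show ?thesis by metis
qed

lemma cyl_measure:
  assumes chain: "nonlinear_markov_chain M P \<mu> X" and xs: "xs \<in> Lm m"
  shows "measure M {\<omega>\<in>space M. map (\<lambda>i. X i \<omega>) [0..<Suc m] = xs} = wt P \<mu> m xs"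
proof -
  have "measure M {\<omega> \<in> space M. \<forall>i\<le>m. X i \<omega> = (\<lambda>i. xs ! i) i}
     = pmf \<mu> ((\<lambda>i. xs ! i) 0) * (\<Prod>i<m. pmf (P (law_at P \<mu> i) ((\<lambda>i. xs ! i) i)) ((\<lambda>i. xs ! i) (Suc i)))"
    using chain unfolding nonlinear_markov_chain_def
    by (elim conjE allE[where x=m] allE[where x="\<lambda>i. xs ! i"]) assumption
  then show ?thesis unfolding cyl_eq[OF xs] wt_def by simp
qed

lemma prob_bound:
  fixes P :: "('a::finite) pmf \<Rightarrow> 'a \<Rightarrow> 'a pmf"
  assumes chain: "nonlinear_markov_chain M P \<mu> X" and e: "0 < \<epsilon>"
  shows "measure M {\<omega> \<in> space M. \<bar>(\<Sum>j<Suc m. g (X j \<omega>)) / real (Suc m) - c\<bar> > \<epsilon>}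
     \<le> Ex P \<mu> m (\<lambda>xs. (Tsum (\<lambda>x. g x - c) xs)\<^sup>2) / (\<epsilon> * real (Suc m))\<^sup>2"
proof -
  let ?h = "\<lambda>x. g x - c"
  let ?n = "real (Suc m)"
  let ?path = "\<lambda>\<omega>. map (\<lambda>i. X i \<omega>) [0..<Suc m]"
  define A where "A = {xs\<in>Lm m. \<epsilon> * ?n < \<bar>Tsum ?h xs\<bar>}"
  have ps: "prob_space M" and X: "\<And>n. X n \<in> measurable M (count_space UNIV)"
    using chain by (auto simp: nonlinear_markov_chain_def)
  interpret prob_space M by (rule ps)
  have finA: "finite A" unfolding A_def using finite_Lm by (rule finite_subset[rotated]) auto
  have Ts: "Tsum ?h (?path \<omega>) = (\<Sum>j<Suc m. g (X j \<omega>)) - ?n * c" for \<omega>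
  proof -
    have "Tsum ?h (?path \<omega>) = (\<Sum>j<Suc m. g (X j \<omega>) - c)"
      unfolding Tsum_def by (simp add: interv_sum_list_conv_sum_set_nat atLeast0LessThan o_def)
    then show ?thesis by (simp add: sum_subtractf)
  qed
  have pathL: "?path \<omega> \<in> Lm m" for \<omega> by (simp add: Lm_def)
  have ev: "{\<omega> \<in> space M. \<bar>(\<Sum>j<Suc m. g (X j \<omega>)) / ?n - c\<bar> > \<epsilon>}
      = (\<Union>xs\<in>A. {\<omega>\<in>space M. ?path \<omega> = xs})"
  proof -
    have "\<bar>(\<Sum>j<Suc m. g (X j \<omega>)) / ?n - c\<bar> > \<epsilon> \<longleftrightarrow> \<epsilon> * ?n < \<bar>Tsum ?h (?path \<omega>)\<bar>" for \<omega>
    proof -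
      have "(\<Sum>j<Suc m. g (X j \<omega>)) / ?n - c = Tsum ?h (?path \<omega>) / ?n"
        unfolding Ts by (simp add: field_simps)
      then show ?thesis by (simp add: field_simps)
    qed
    then show ?thesis unfolding A_def using pathL by auto
  qed
  have "measure M (\<Union>xs\<in>A. {\<omega>\<in>space M. ?path \<omega> = xs})
      \<le> (\<Sum>xs\<in>A. measure M {\<omega>\<in>space M. ?path \<omega> = xs})"
  proof (rule measure_subadditive_finite[OF finA])
    show "(\<lambda>xs. {\<omega>\<in>space M. ?path \<omega> = xs}) ` A \<subseteq> sets M"
    proof (rule image_subsetI)
      fix xs assume "xs \<in> A"
      then have xL: "xs \<in> Lm m" by (simp add: A_def)
      show "{\<omega>\<in>space M. ?path \<omega> = xs} \<in> sets M"
        unfolding cyl_eq[OF xL] by (rule cyl_sets[OF X])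
    qed
    show "emeasure M {\<omega>\<in>space M. ?path \<omega> = xs} \<noteq> \<infinity>" for xs
      by (metis emeasure_finite infinity_ennreal_def)
  qed
  also have "\<dots> = (\<Sum>xs\<in>A. wt P \<mu> m xs)"
  proof (rule sum.cong[OF refl])
    fix xs assume "xs \<in> A"
    then have xL: "xs \<in> Lm m" by (simp add: A_def)
    show "measure M {\<omega>\<in>space M. ?path \<omega> = xs} = wt P \<mu> m xs" by (rule cyl_measure[OF chain xL])
  qed
  also have "\<dots> \<le> (\<Sum>xs\<in>A. wt P \<mu> m xs * ((Tsum ?h xs)\<^sup>2 / (\<epsilon> * ?n)\<^sup>2))"
  proof (rule sum_mono)
    fix xs assume "xs \<in> A"
    then have "\<epsilon> * ?n < \<bar>Tsum ?h xs\<bar>" by (simp add: A_def)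
    moreover have "0 < \<epsilon> * ?n" using e by simp
    ultimately have "(\<epsilon> * ?n)\<^sup>2 \<le> (Tsum ?h xs)\<^sup>2"
      by (metis abs_le_square_iff abs_of_pos less_imp_le)
    then have "1 \<le> (Tsum ?h xs)\<^sup>2 / (\<epsilon> * ?n)\<^sup>2" using \<open>0 < \<epsilon> * ?n\<close> e by (simp add: le_divide_eq)
    then show "wt P \<mu> m xs \<le> wt P \<mu> m xs * ((Tsum ?h xs)\<^sup>2 / (\<epsilon> * ?n)\<^sup>2)"
      using wt_nonneg[of P \<mu> m xs] by (metis mult_left_mono mult.right_neutral)
  qed
  also have "\<dots> \<le> (\<Sum>xs\<in>Lm m. wt P \<mu> m xs * ((Tsum ?h xs)\<^sup>2 / (\<epsilon> * ?n)\<^sup>2))"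
    by (rule sum_mono2[OF finite_Lm]) (auto simp: A_def wt_nonneg)
  also have "\<dots> = Ex P \<mu> m (\<lambda>xs. (Tsum ?h xs)\<^sup>2) / (\<epsilon> * ?n)\<^sup>2"
    unfolding Ex_def by (simp add: sum_divide_distrib)
  finally show ?thesis using ev by simp
qed

theorem theorem3:
  fixes P :: "('a::finite) pmf \<Rightarrow> 'a \<Rightarrow> 'a pmf"
    and k :: nat and alpha_k lambda_k lambda_1 :: real
    and \<pi> \<mu> :: "'a pmf" and g :: "'a \<Rightarrow> real"
    and M :: "'b measure" and X :: "nat \<Rightarrow> 'b \<Rightarrow> 'a"
  assumes k: "k \<ge> 1"
    and i: "0 < alpha_k" "alpha_k < 1"
      "\<forall>x y \<mu>' \<nu>'. tv_norm (kstep_kernel P k \<mu>' x) (kstep_kernel P k \<nu>' y) \<le> 2 * (1 - alpha_k)"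
    and ii: "0 \<le> lambda_k" "lambda_k \<le> alpha_k"
      "\<forall>x \<mu>' \<nu>'. tv_norm (kstep_kernel P k \<mu>' x) (kstep_kernel P k \<nu>' x) \<le> lambda_k * tv_norm \<mu>' \<nu>'"
    and iii: "\<forall>x \<mu>' \<nu>'. tv_norm (P \<mu>' x) (P \<nu>' x) \<le> lambda_1 * tv_norm \<mu>' \<nu>'"
    and inv: "law_step P \<pi> = \<pi>"
    and chain: "nonlinear_markov_chain M P \<mu> X"
  shows "conv_in_prob M (\<lambda>n \<omega>. (\<Sum>j<n. g (X j \<omega>)) / real n) (measure_pmf.expectation \<pi> g)"
  unfolding conv_in_prob_def
proof (intro allI impI)
  fix \<epsilon> :: real assume e: "0 < \<epsilon>"
  define c where "c = measure_pmf.expectation \<pi> g"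
  define h where "h x = g x - c" for x
  define H where "H = (\<Sum>x\<in>UNIV. \<bar>h x\<bar>)"
  define G where "G = (\<Sum>x\<in>UNIV. \<bar>g x\<bar>)"
  define ee where "ee j = ip (law_at P \<mu> j) h" for j
  define \<rho> where "\<rho> j = (1 - alpha_k) ^ (j div k)" for j
  have hH: "\<bar>h x\<bar> \<le> H" for x unfolding H_def by (rule member_le_sum) auto
  have H0: "0 \<le> H" unfolding H_def by (simp add: sum_nonneg)
  have gG: "\<bar>g x\<bar> \<le> G" for x unfolding G_def by (rule member_le_sum) auto
  have a1: "alpha_k \<le> 1" using i by simp
  have c_eq: "c = ip \<pi> g" unfolding c_def ip_def by (simp add: expectation_fin)
  have eb: "\<bar>ee j\<bar> \<le> G * tv_norm (law_at P \<mu> j) \<pi>" for j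
  proof -
    have "ee j = (\<Sum>x\<in>UNIV. (pmf (law_at P \<mu> j) x - pmf \<pi> x) * g x)"
      unfolding ee_def ip_def h_def c_eq
      by (simp add: right_diff_distrib left_diff_distrib sum_subtractf
            sum_distrib_right[symmetric] sum_pmf_UNIV)
    also have "\<bar>\<dots>\<bar> \<le> (\<Sum>x\<in>UNIV. \<bar>pmf (law_at P \<mu> j) x - pmf \<pi> x\<bar> * G)"
      by (rule order.trans[OF sum_abs], rule sum_mono)
         (simp add: abs_mult mult_left_mono gG)
    finally show ?thesis by (simp add: tv_norm_L1 sum_distrib_left mult.commute)
  qed
  have ebl: "- (G * tv_norm (law_at P \<mu> j) \<pi>) \<le> ee j" for j
    using abs_le_D2[OF eb[of j]] by linarith
  have ebu: "ee j \<le> G * tv_norm (law_at P \<mu> j) \<pi>" for j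
    using abs_le_D1[OF eb[of j]] .
  have tv0: "(\<lambda>j. tv_norm (law_at P \<mu> j) \<pi>) \<longlonglongrightarrow> 0"
    by (rule law_to_pi[OF k i(1) i(3) ii inv])
  have ee0: "ee \<longlonglongrightarrow> 0"
  proof (rule tendsto_sandwich[of "\<lambda>j. - (G * tv_norm (law_at P \<mu> j) \<pi>)" _ _ "\<lambda>j. G * tv_norm (law_at P \<mu> j) \<pi>"])
    show "\<forall>\<^sub>F j in sequentially. - (G * tv_norm (law_at P \<mu> j) \<pi>) \<le> ee j"
      using ebl by (intro always_eventually allI)
    show "\<forall>\<^sub>F j in sequentially. ee j \<le> G * tv_norm (law_at P \<mu> j) \<pi>"
      using ebu by (intro always_eventually allI)
    show "(\<lambda>j. - (G * tv_norm (law_at P \<mu> j) \<pi>)) \<longlonglongrightarrow> 0"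
      using tendsto_minus[OF tendsto_mult_right_zero[OF tv0, of G]] by simp
    show "(\<lambda>j. G * tv_norm (law_at P \<mu> j) \<pi>) \<longlonglongrightarrow> 0"
      using tendsto_mult_right_zero[OF tv0, of G] by simp
  qed
  have ee1: "(\<lambda>j. ee (Suc j)) \<longlonglongrightarrow> 0" using LIMSEQ_Suc[OF ee0] .
  have \<rho>0: "\<rho> \<longlonglongrightarrow> 0"
  proof -
    have "(\<lambda>n. (1 - alpha_k) ^ n) \<longlonglongrightarrow> 0" using i by (intro LIMSEQ_power_zero) simp
    from filterlim_compose[OF this div_filterlim] k show ?thesis unfolding \<rho>_def by simp
  qed
  define EE where "EE n = (\<Sum>j<n. \<bar>ee (Suc j)\<bar>)" for n
  define RR where "RR n = (\<Sum>j<n. \<bar>\<rho> j\<bar>)" for n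
  have C1: "(\<lambda>n. EE n / real n) \<longlonglongrightarrow> 0" unfolding EE_def by (rule cesaro[OF ee1])
  have C2: "(\<lambda>n. RR n / real n) \<longlonglongrightarrow> 0" unfolding RR_def by (rule cesaro[OF \<rho>0])
  define b where "b n = (H\<^sup>2 * (1 / real n) + 2 * H * (EE n / real n) + 4 * H\<^sup>2 * (RR n / real n)) / \<epsilon>\<^sup>2" for n
  have b0: "b \<longlonglongrightarrow> 0"
  proof -
    have "b \<longlonglongrightarrow> (H\<^sup>2 * 0 + 2 * H * 0 + 4 * H\<^sup>2 * 0) / \<epsilon>\<^sup>2"
      unfolding b_def[abs_def] by (intro tendsto_intros C1 C2 lim_inverse_n') (use e in simp)
    then show ?thesis by simp
  qed
  have bound: "measure M {\<omega> \<in> space M. \<bar>(\<Sum>j<n. g (X j \<omega>)) / real n - c\<bar> > \<epsilon>} \<le> b n"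
    if n: "1 \<le> n" for n
  proof -
    obtain m where nm: "n = Suc m" using n by (cases n) auto
    have Vb: "Ex P \<mu> m (\<lambda>xs. (Tsum h xs)\<^sup>2)
      \<le> real (Suc m) * H\<^sup>2 + 2 * H * real m * (\<Sum>j<m. \<bar>ip (law_at P \<mu> (Suc j)) h\<bar>)
        + 4 * H\<^sup>2 * real m * (\<Sum>j<m. (1 - alpha_k) ^ (j div k))"
      by (rule V_bound[OF i(3) a1 hH])
    have E1: "(\<Sum>j<m. \<bar>ip (law_at P \<mu> (Suc j)) h\<bar>) \<le> EE n"
      unfolding EE_def ee_def nm by (simp add: sum_nonneg)
    have R1: "(\<Sum>j<m. (1 - alpha_k) ^ (j div k)) \<le> RR n"
    proof -
      have "(\<Sum>j<m. (1 - alpha_k) ^ (j div k)) = (\<Sum>j<m. \<bar>\<rho> j\<bar>)"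
        unfolding \<rho>_def using a1 by simp
      also have "\<dots> \<le> RR n" unfolding RR_def nm by simp
      finally show ?thesis .
    qed
    have EE0: "0 \<le> EE n" unfolding EE_def by (simp add: sum_nonneg)
    have RR0: "0 \<le> RR n" unfolding RR_def by (simp add: sum_nonneg)
    have mn: "real m \<le> real n" using nm by simp
    have "2 * H * real m * (\<Sum>j<m. \<bar>ip (law_at P \<mu> (Suc j)) h\<bar>) \<le> 2 * H * real n * EE n"
      using H0 E1 mn EE0 by (intro mult_mono mult_left_mono) auto
    moreover have "4 * H\<^sup>2 * real m * (\<Sum>j<m. (1 - alpha_k) ^ (j div k)) \<le> 4 * H\<^sup>2 * real n * RR n"
      using H0 R1 mn RR0 using a1 by (intro mult_mono mult_left_mono) (auto intro: sum_nonneg)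
    ultimately have Vn: "Ex P \<mu> m (\<lambda>xs. (Tsum h xs)\<^sup>2) \<le> real n * (H\<^sup>2 + 2 * H * EE n + 4 * H\<^sup>2 * RR n)"
      using Vb nm by (simp add: algebra_simps)
    have npos: "0 < real n" using n by simp
    have "measure M {\<omega> \<in> space M. \<bar>(\<Sum>j<n. g (X j \<omega>)) / real n - c\<bar> > \<epsilon>}
        \<le> Ex P \<mu> m (\<lambda>xs. (Tsum (\<lambda>x. g x - c) xs)\<^sup>2) / (\<epsilon> * real (Suc m))\<^sup>2"
      unfolding nm by (rule prob_bound[OF chain e])
    also have "(\<lambda>x. g x - c) = h" by (simp add: h_def fun_eq_iff)
    also have "Ex P \<mu> m (\<lambda>xs. (Tsum h xs)\<^sup>2) / (\<epsilon> * real (Suc m))\<^sup>2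
        \<le> real n * (H\<^sup>2 + 2 * H * EE n + 4 * H\<^sup>2 * RR n) / (\<epsilon> * real n)\<^sup>2"
      unfolding nm[symmetric] by (rule divide_right_mono[OF Vn]) simp
    also have "\<dots> = b n"
      unfolding b_def using npos e by (simp add: field_simps power2_eq_square)
    finally show ?thesis .
  qed
  show "(\<lambda>n. measure M {\<omega> \<in> space M. \<bar>(\<Sum>j<n. g (X j \<omega>)) / real n - measure_pmf.expectation \<pi> g\<bar> > \<epsilon>}) \<longlonglongrightarrow> 0"
    unfolding c_def[symmetric]
  proof (rule tendsto_sandwich[OF _ _ tendsto_const b0])
    show "\<forall>\<^sub>F n in sequentially. 0 \<le> measure M {\<omega> \<in> space M. \<bar>(\<Sum>j<n. g (X j \<omega>)) / real n - c\<bar> > \<epsilon>}"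
      by simp
    show "\<forall>\<^sub>F n in sequentially. measure M {\<omega> \<in> space M. \<bar>(\<Sum>j<n. g (X j \<omega>)) / real n - c\<bar> > \<epsilon>} \<le> b n"
      unfolding eventually_sequentially using bound by blast
  qed
qed

end
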